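(* Let $d\ge1$ and $x,y,u,v\in\mathbb{R}^d_{>0}$, and set $a^\pm:=s^\pm(x,y)$, $b^\pm:=s^\pm(u,v)$. Then there exist $y^*,v^*\in\mathbb{R}^d_{>0}$ such that \[ F_d(x,y^*;u,v^* )\ge F_d(x,y;u,v),\qquad s^\pm(x,y^* )=s^\pm(x,y),\qquad s^\pm(u,v^* )=s^\pm(u,v), \] and for every $1\le i\le d$, $\frac{y^*_i}{x_i}\in\{a^-,a^+\}$ and $\frac{v^*_i}{u_i}\in\{b^-,b^+\}$.
   Context: For $x,y\in\mathbb{R}^d_{>0}$ define $s^+(x,y)=\max_i \frac{y_i}{x_i}$ and $s^-(x,y)=\min_i\frac{y_i}{x_i}$ (the statement $s^\pm(\cdot)=s^\pm(\cdot)$ means both the max and the min agree). Define $F_d:(\mathbb{R}^d_{>0})^4\to\mathbb{R}_{>0}$ by $F_d(x,y;u,v)=\frac{(x\cdot u)(y\cdot v)}{(x\cdot v)(y\cdot u)}$, where $\cdot$ is the standard Euclidean dot product. *)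

theory Defs
  imports "HOL-Analysis.Analysis"
begin

definition pos_vec :: "real ^ 'n \<Rightarrow> bool" where
  "pos_vec x \<longleftrightarrow> (\<forall>i. x $ i > 0)"

definition s_plus :: "real ^ 'n \<Rightarrow> real ^ 'n \<Rightarrow> real" where
  "s_plus x y = Max ((\<lambda>i. y $ i / x $ i) ` UNIV)"

definition s_minus :: "real ^ 'n \<Rightarrow> real ^ 'n \<Rightarrow> real" where
  "s_minus x y = Min ((\<lambda>i. y $ i / x $ i) ` UNIV)"

definition F_d :: "real ^ 'n \<Rightarrow> real ^ 'n \<Rightarrow> real ^ 'n \<Rightarrow> real ^ 'n \<Rightarrow> real" where
  "F_d x y u v = ((x \<bullet> u) * (y \<bullet> v)) / ((x \<bullet> v) * (y \<bullet> u))"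

end

theory Submission
  imports Defs
begin

lemma inner_pos:
  fixes a b :: "real ^ 'n"
  assumes "pos_vec a" "pos_vec b"
  shows "a \<bullet> b > 0"
proof -
  have "a \<bullet> b = (\<Sum>i\<in>UNIV. a $ i * b $ i)" by (simp add: inner_vec_def)
  also have "\<dots> > 0"
    using assms by (intro sum_pos) (auto simp: pos_vec_def)
  finally show ?thesis .
qed

lemma push:
  fixes z w p q :: "real ^ 'n"
  assumes z: "pos_vec z" and w: "pos_vec w" and p: "pos_vec p" and q: "pos_vec q"
  shows "\<exists>w'. pos_vec w' \<and> s_plus z w' = s_plus z w \<and> s_minus z w' = s_minus z w \<and>
     (\<forall>i. w' $ i / z $ i \<in> {s_minus z w, s_plus z w}) \<and>
     (p \<bullet> w) / (q \<bullet> w) \<le> (p \<bullet> w') / (q \<bullet> w')"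
proof -
  define f where "f i = w $ i / z $ i" for i
  define hi where "hi = s_plus z w"
  define lo where "lo = s_minus z w"
  have hi': "hi = Max (range f)" unfolding hi_def s_plus_def f_def by simp
  have lo': "lo = Min (range f)" unfolding lo_def s_minus_def f_def by simp
  have fin: "finite (range f)" by simp
  have "hi \<in> range f" unfolding hi' by (rule Max_in) auto
  then obtain imax where imax: "f imax = hi" by auto
  have "lo \<in> range f" unfolding lo' by (rule Min_in) auto
  then obtain imin where imin: "f imin = lo" by auto
  have fle: "f i \<le> hi" for i unfolding hi' by (rule Max_ge) auto
  have fge: "lo \<le> f i" for i unfolding lo' by (rule Min_le) auto
  have zp: "z $ i > 0" for i using z by (auto simp: pos_vec_def)
  have wp: "w $ i > 0" for i using w by (auto simp: pos_vec_def)
  have fpos: "f i > 0" for i using zp wp by (simp add: f_def)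
  have lopos: "lo > 0" using fpos[of imin] imin by simp
  have hipos: "hi > 0" using fpos[of imax] imax by simp
  define R where "R = (p \<bullet> w) / (q \<bullet> w)"
  define c where "c i = p $ i - R * q $ i" for i
  define w' :: "real ^ 'n" where "w' = (\<chi> i. if i = imax \<or> i = imin then w $ i
        else if c i \<ge> 0 then hi * z $ i else lo * z $ i)"
  have w'pos: "pos_vec w'" unfolding pos_vec_def w'_def using wp zp lopos hipos by auto
  have rat: "w' $ i / z $ i = (if i = imax \<or> i = imin then f i else if c i \<ge> 0 then hi else lo)" for i
    unfolding w'_def f_def using zp[of i] by auto
  have ratin: "w' $ i / z $ i \<in> {lo, hi}" for i
    unfolding rat using imax imin by auto
  have ratle: "w' $ i / z $ i \<le> hi" for i using ratin[of i] fle[of imin] imin by auto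
  have ratge: "lo \<le> w' $ i / z $ i" for i using ratin[of i] fge[of imax] imax by auto
  have sp: "s_plus z w' = hi"
    unfolding s_plus_def
    apply (rule Max_eqI) using ratle rat[of imax] imax by auto
  have sm: "s_minus z w' = lo"
    unfolding s_minus_def
    apply (rule Min_eqI) using ratge rat[of imin] imin by auto
  have qw: "q \<bullet> w > 0" using inner_pos[OF q w] .
  have qw': "q \<bullet> w' > 0" using inner_pos[OF q w'pos] .
  have ip: "a \<bullet> b = (\<Sum>i\<in>UNIV. a $ i * b $ i)" for a b :: "real ^ 'n"
    by (simp add: inner_vec_def)
  have s0: "(\<Sum>i\<in>UNIV. w $ i * c i) = 0"
  proof -
    have "(\<Sum>i\<in>UNIV. w $ i * c i) = p \<bullet> w - R * (q \<bullet> w)"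
      unfolding ip c_def by (simp add: algebra_simps sum_subtractf sum_distrib_left)
    also have "\<dots> = 0" unfolding R_def using qw by simp
    finally show ?thesis .
  qed
  have trm: "(w' $ i - w $ i) * c i \<ge> 0" for i
  proof (cases "i = imax \<or> i = imin")
    case True then show ?thesis unfolding w'_def by simp
  next
    case False
    have a: "w $ i \<le> hi * z $ i" using fle[of i] zp[of i] by (simp add: f_def divide_le_eq)
    have b: "lo * z $ i \<le> w $ i" using fge[of i] zp[of i] by (simp add: f_def le_divide_eq)
    show ?thesis
    proof (cases "c i \<ge> 0")
      case True then show ?thesis using False a unfolding w'_def by simp
    next
      case n: False
      then show ?thesis using False b unfolding w'_def by (simp add: mult_nonpos_nonpos)
    qed
  qed
  have "(\<Sum>i\<in>UNIV. (w' $ i - w $ i) * c i) \<ge> 0" by (rule sum_nonneg) (use trm in auto)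
  then have "(\<Sum>i\<in>UNIV. w' $ i * c i) \<ge> 0"
    using s0 by (simp add: algebra_simps sum_subtractf)
  moreover have "(\<Sum>i\<in>UNIV. w' $ i * c i) = p \<bullet> w' - R * (q \<bullet> w')"
    unfolding ip c_def by (simp add: algebra_simps sum_subtractf sum_distrib_left)
  ultimately have "R * (q \<bullet> w') \<le> p \<bullet> w'" by simp
  then have "R \<le> (p \<bullet> w') / (q \<bullet> w')" using qw' by (simp add: le_divide_eq)
  then show ?thesis using w'pos sp sm ratin unfolding R_def hi_def lo_def by blast
qed

theorem mainTheorem6:
  fixes x y u v :: "real ^ 'n"
  assumes "pos_vec x" "pos_vec y" "pos_vec u" "pos_vec v"
  shows "\<exists>ys vs :: real ^ 'n.
           pos_vec ys \<and> pos_vec vs \<and>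
           F_d x ys u vs \<ge> F_d x y u v \<and>
           s_plus x ys = s_plus x y \<and> s_minus x ys = s_minus x y \<and>
           s_plus u vs = s_plus u v \<and> s_minus u vs = s_minus u v \<and>
           (\<forall>i. ys $ i / x $ i \<in> {s_minus x y, s_plus x y} \<and>
                vs $ i / u $ i \<in> {s_minus u v, s_plus u v})"
proof -
  obtain ys where ys: "pos_vec ys" "s_plus x ys = s_plus x y" "s_minus x ys = s_minus x y"
     "\<forall>i. ys $ i / x $ i \<in> {s_minus x y, s_plus x y}"
     "(v \<bullet> y) / (u \<bullet> y) \<le> (v \<bullet> ys) / (u \<bullet> ys)"
    using push[OF assms(1,2,4,3)] by blast
  obtain vs where vs: "pos_vec vs" "s_plus u vs = s_plus u v" "s_minus u vs = s_minus u v"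
     "\<forall>i. vs $ i / u $ i \<in> {s_minus u v, s_plus u v}"
     "(ys \<bullet> v) / (x \<bullet> v) \<le> (ys \<bullet> vs) / (x \<bullet> vs)"
    using push[OF assms(3,4) ys(1) assms(1)] by blast
  have xu: "x \<bullet> u > 0" using inner_pos assms by blast
  have xv: "x \<bullet> v > 0" using inner_pos assms by blast
  have yu: "y \<bullet> u > 0" using inner_pos assms by blast
  have ysu: "ys \<bullet> u > 0" using inner_pos assms ys(1) by blast
  have "F_d x y u v = ((x \<bullet> u) / (x \<bullet> v)) * ((v \<bullet> y) / (u \<bullet> y))"
    unfolding F_d_def by (simp add: inner_commute)
  also have "\<dots> \<le> ((x \<bullet> u) / (x \<bullet> v)) * ((v \<bullet> ys) / (u \<bullet> ys))"
    using ys(5) xu xv by (intro mult_left_mono) auto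
  also have "\<dots> = ((x \<bullet> u) / (ys \<bullet> u)) * ((ys \<bullet> v) / (x \<bullet> v))"
    by (simp add: inner_commute)
  also have "\<dots> \<le> ((x \<bullet> u) / (ys \<bullet> u)) * ((ys \<bullet> vs) / (x \<bullet> vs))"
    using vs(5) xu ysu by (intro mult_left_mono) auto
  also have "\<dots> = F_d x ys u vs"
    unfolding F_d_def by (simp add: inner_commute)
  finally have "F_d x y u v \<le> F_d x ys u vs" .
  then show ?thesis using ys vs by blast
qed

end
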